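(* Let $n$ and $t$ be positive integers and $d=2t+1$. If $t\leqslant n-\sqrt{n}-1$, $n\cdot\prod_{i=0}^{t}(n-i)\leqslant d\cdot d!$, and $d\leqslant n-1$, then $A_{new}(n,d)\leqslant A_{SP}(n,d)$.
   Context: $S_n$ is the symmetric group on $[n]$; the characteristic set of $\pi\in S_n$ is $A(\pi)=\{(\pi(i),\pi(i+1)):1\leqslant i<n\}$, and the block permutation distance is $d_B(\pi_1,\pi_2)=|A(\pi_1)\setminus A(\pi_2)|$. The $t$-block permutation ball $b_B(n,t)$ is the set of $\sigma\in S_n$ with $d_B(\sigma,\mathrm{id})\leqslant t$. The sphere-packing bound is $A_{SP}(n,2t+1)=\frac{n!}{|b_B(n,t)|}$, and the new bound is $A_{new}(n,d)=\frac{\binom{n}{d}\binom{n}{d}(n-d)!}{\binom{n-1}{n-d}}$. *)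

theory Defs
  imports "HOL-Combinatorics.Permutations" Complex_Main
begin

text \<open>Permutations of [n] = {1..n} are functions nat => nat with \<open>\<sigma> permutes {1..n}\<close>.\<close>

definition char_set :: "nat \<Rightarrow> (nat \<Rightarrow> nat) \<Rightarrow> (nat \<times> nat) set" where
  "char_set n \<pi> = {(\<pi> i, \<pi> (i + 1)) | i. 1 \<le> i \<and> i < n}"

definition block_dist :: "nat \<Rightarrow> (nat \<Rightarrow> nat) \<Rightarrow> (nat \<Rightarrow> nat) \<Rightarrow> nat" where
  "block_dist n \<pi>1 \<pi>2 = card (char_set n \<pi>1 - char_set n \<pi>2)"

definition block_ball :: "nat \<Rightarrow> nat \<Rightarrow> (nat \<Rightarrow> nat) set" where
  "block_ball n t = {\<sigma>. \<sigma> permutes {1..n} \<and> block_dist n \<sigma> id \<le> t}"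

text \<open>Sphere-packing bound A_SP(n, 2t+1) = n! / |b_B(n,t)|.\<close>
definition A_SP :: "nat \<Rightarrow> nat \<Rightarrow> real" where
  "A_SP n t = fact n / real (card (block_ball n t))"

definition A_new :: "nat \<Rightarrow> nat \<Rightarrow> real" where
  "A_new n d = real (n choose d) * real (n choose d) * fact (n - d) / real ((n - 1) choose (n - d))"

end

theory Submission imports Defs begin

definition good :: "nat \<Rightarrow> nat \<Rightarrow> (nat \<Rightarrow> nat) \<Rightarrow> nat set \<Rightarrow> bool" where
  "good n t \<sigma> Q \<longleftrightarrow> Q \<subseteq> {1..n} \<and> 1 \<in> Q \<and> card Q = Suc t \<and>
     (\<forall>i. 1 \<le> i \<longrightarrow> i < n \<longrightarrow> Suc i \<notin> Q \<longrightarrow> \<sigma> (Suc i) = Suc (\<sigma> i))"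

definition nxt :: "nat \<Rightarrow> nat list \<Rightarrow> nat \<Rightarrow> nat" where
  "nxt n L v = Min {w \<in> insert (Suc n) (set L). v < w}"

lemma block_step:
  assumes perm: "\<sigma> permutes {1..n}" and g: "good n t \<sigma> Q" and k: "k < t"
  shows "sorted_list_of_set Q ! Suc k = sorted_list_of_set Q ! k +
           (nxt n (map \<sigma> (sorted_list_of_set Q)) (\<sigma> (sorted_list_of_set Q ! k)) - \<sigma> (sorted_list_of_set Q ! k))"
proof -
  define qs where "qs = sorted_list_of_set Q"
  have Qsub: "Q \<subseteq> {1..n}" and Q1: "1 \<in> Q" and cQ: "card Q = Suc t"
    and inc: "\<And>i. 1 \<le> i \<Longrightarrow> i < n \<Longrightarrow> Suc i \<notin> Q \<Longrightarrow> \<sigma> (Suc i) = Suc (\<sigma> i)"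
    using g unfolding good_def by auto
  have finQ: "finite Q" using Qsub finite_subset by blast
  have len: "length qs = Suc t" using cQ finQ by (simp add: qs_def)
  have setqs: "set qs = Q" using finQ by (simp add: qs_def)
  have ss: "sorted_wrt (<) qs" by (simp add: qs_def)
  have lt: "\<And>i j. i < j \<Longrightarrow> j < Suc t \<Longrightarrow> qs ! i < qs ! j"
    using ss len by (simp add: sorted_wrt_iff_nth_less)
  define a where "a = qs ! k"
  define b where "b = qs ! Suc k"
  have ab: "a < b" using lt k by (simp add: a_def b_def)
  have aQ: "a \<in> Q" and bQ: "b \<in> Q" using len k setqs unfolding a_def b_def
    by (auto intro!: nth_mem)
  have a1: "1 \<le> a" and bn: "b \<le> n" using aQ bQ Qsub by auto
  have between: "c \<notin> Q" if "a < c" "c < b" for c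
  proof
    assume "c \<in> Q"
    then obtain j where j: "j < Suc t" "c = qs ! j" using setqs len by (metis in_set_conv_nth)
    show False
    proof (cases "j \<le> k")
      case True
      then have "qs ! j \<le> a" using lt[of j k] k unfolding a_def by (cases "j = k") auto
      then show False using that j by simp
    next
      case False
      then have "b \<le> qs ! j" using lt[of "Suc k" j] j unfolding b_def by (cases "j = Suc k") auto
      then show False using that j by simp
    qed
  qed
  have lin: "a + m < b \<longrightarrow> \<sigma> (a + m) = \<sigma> a + m" for m
  proof (induction m)
    case 0 then show ?case by simp
  next
    case (Suc m)
    show ?case
    proof
      assume h: "a + Suc m < b"
      have "\<sigma> (Suc (a + m)) = Suc (\<sigma> (a + m))"
        using inc[of "a + m"] a1 bn h between[of "Suc (a+m)"] by auto
      then show "\<sigma> (a + Suc m) = \<sigma> a + Suc m" using Suc h by simp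
    qed
  qed
  have injs: "inj_on \<sigma> {1..n}" using perm permutes_inj_on by blast
  have imgs: "\<sigma> ` {1..n} = {1..n}" using perm permutes_image by blast
  define v where "v = \<sigma> a"
  define w where "w = v + (b - a)"
  have bm1: "\<sigma> (b - 1) = w - 1"
    using lin[of "b - 1 - a"] ab unfolding w_def v_def by auto
  have "b - 1 \<in> {1..n}" using a1 ab bn by auto
  then have "\<sigma> (b - 1) \<in> {1..n}" using imgs by blast
  then have wle: "w \<le> Suc n" and w1: "w \<ge> 2" using bm1 ab unfolding w_def by auto
  define M where "M = {w' \<in> insert (Suc n) (set (map \<sigma> qs)). v < w'}"
  have finM: "finite M" unfolding M_def by auto
  have wM: "w \<in> M"
  proof (cases "w = Suc n")
    case True then show ?thesis using ab unfolding M_def w_def by auto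
  next
    case False
    then have "w \<in> {1..n}" using wle w1 by auto
    then obtain p where p: "p \<in> {1..n}" "\<sigma> p = w" using imgs by (metis imageE)
    have "p \<in> Q"
    proof (rule ccontr)
      assume pQ: "p \<notin> Q"
      then have "p \<noteq> 1" using Q1 by auto
      then obtain p' where p': "p = Suc p'" "1 \<le> p'" using p by (cases p) auto
      have "\<sigma> p = Suc (\<sigma> p')" using inc[of p'] p' p pQ by auto
      then have "\<sigma> p' = \<sigma> (b - 1)" using bm1 p by simp
      moreover have "p' \<in> {1..n}" "b - 1 \<in> {1..n}" using p' p a1 ab bn by auto
      ultimately have "p' = b - 1" using injs by (meson inj_onD)
      then show False using pQ bQ p' ab by simp
    qed
    then have "w \<in> set (map \<sigma> qs)" using p setqs by auto
    moreover have "v < w" using ab unfolding w_def by simp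
    ultimately show ?thesis unfolding M_def by blast
  qed
  have wmin: "w \<le> w'" if w'M: "w' \<in> M" for w'
  proof (rule ccontr)
    assume "\<not> w \<le> w'"
    then have ww: "w' < w" by simp
    have vw: "v < w'" using that unfolding M_def by auto
    have "w' \<noteq> Suc n" using ww wle bm1 \<open>\<sigma> (b - 1) \<in> {1..n}\<close> by auto
    then obtain q where q: "q \<in> Q" "w' = \<sigma> q" using w'M setqs unfolding M_def by auto
    define m where "m = w' - v"
    have m: "0 < m" "a + m < b" using vw ww unfolding m_def w_def by auto
    have "\<sigma> (a + m) = w'" using lin[of m] m vw unfolding m_def v_def by auto
    moreover have "a + m \<in> {1..n}" "q \<in> {1..n}" using m a1 bn q Qsub by auto
    ultimately have "a + m = q" using q injs by (metis inj_onD)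
    then show False using between[of "a + m"] m q by auto
  qed
  have "nxt n (map \<sigma> qs) v = w"
    unfolding nxt_def M_def[symmetric] using finM wM wmin by (intro Min_eqI) auto
  then show ?thesis using ab unfolding qs_def[symmetric] a_def[symmetric] b_def[symmetric] v_def[symmetric] w_def
    by simp
qed

lemma qs0:
  assumes g: "good n t \<sigma> Q"
  shows "sorted_list_of_set Q ! 0 = 1"
proof -
  define qs where "qs = sorted_list_of_set Q"
  have Qsub: "Q \<subseteq> {1..n}" and Q1: "1 \<in> Q" and cQ: "card Q = Suc t"
    using g unfolding good_def by auto
  have finQ: "finite Q" using Qsub finite_subset by blast
  have len: "length qs = Suc t" using cQ finQ by (simp add: qs_def)
  have setqs: "set qs = Q" using finQ by (simp add: qs_def)
  have ss: "sorted_wrt (<) qs" by (simp add: qs_def)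
  obtain j where j: "j < Suc t" "qs ! j = 1" using Q1 setqs len by (metis in_set_conv_nth)
  have "qs ! 0 \<le> 1"
  proof (cases j)
    case 0 then show ?thesis using j by simp
  next
    case (Suc j')
    have lt: "\<And>i j. i < j \<Longrightarrow> j < length qs \<Longrightarrow> qs ! i < qs ! j"
      using ss by (simp add: sorted_wrt_iff_nth_less)
    have "qs ! 0 < qs ! j" using lt[of 0 j] Suc j len by simp
    then show ?thesis using j by simp
  qed
  moreover have "qs ! 0 \<in> Q" using setqs len by (metis nth_mem zero_less_Suc)
  ultimately show ?thesis using Qsub unfolding qs_def by auto
qed

lemma enc_inj:
  assumes p1: "\<sigma> permutes {1..n}" and g1: "good n t \<sigma> Q1"
    and p2: "\<tau> permutes {1..n}" and g2: "good n t \<tau> Q2"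
    and eq: "map \<sigma> (sorted_list_of_set Q1) = map \<tau> (sorted_list_of_set Q2)"
  shows "\<sigma> = \<tau>"
proof -
  define q1 where "q1 = sorted_list_of_set Q1"
  define q2 where "q2 = sorted_list_of_set Q2"
  define L where "L = map \<sigma> q1"
  have L2: "L = map \<tau> q2" using eq by (simp add: L_def q1_def q2_def)
  have fin1: "finite Q1" and fin2: "finite Q2" using g1 g2 unfolding good_def
    by (auto intro: finite_subset)
  have len1: "length q1 = Suc t" and len2: "length q2 = Suc t"
    using g1 g2 fin1 fin2 unfolding good_def q1_def q2_def by auto
  have nth_eq: "k \<le> t \<longrightarrow> q1 ! k = q2 ! k" for k
  proof (induction k)
    case 0 then show ?case using qs0[OF g1] qs0[OF g2] by (simp add: q1_def q2_def)
  next
    case (Suc k)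
    show ?case
    proof
      assume h: "Suc k \<le> t"
      have e1: "q1 ! Suc k = q1 ! k + (nxt n L (L ! k) - L ! k)"
        using block_step[OF p1 g1, of k] h len1 by (simp add: q1_def[symmetric] L_def)
      have e2: "q2 ! Suc k = q2 ! k + (nxt n L (L ! k) - L ! k)"
        using block_step[OF p2 g2, of k] h len2 by (simp add: q2_def[symmetric] L2)
      show "q1 ! Suc k = q2 ! Suc k" using e1 e2 Suc h by simp
    qed
  qed
  have "q1 = q2" using len1 len2 nth_eq by (intro nth_equalityI) auto
  have "Q1 = set q1" using fin1 by (simp add: q1_def)
  moreover have "Q2 = set q2" using fin2 by (simp add: q2_def)
  ultimately have QQ: "Q1 = Q2" using \<open>q1 = q2\<close> by simp
  have onQ: "\<sigma> q = \<tau> q" if "q \<in> Q1" for q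
  proof -
    have "q \<in> set q1" using that fin1 by (simp add: q1_def)
    then obtain j where j: "j < length q1" "q = q1 ! j" by (metis in_set_conv_nth)
    have "\<sigma> q = L ! j" using j by (simp add: L_def)
    also have "\<dots> = \<tau> (q2 ! j)" using j L2 len1 len2 by simp
    also have "\<dots> = \<tau> q" using j \<open>q1 = q2\<close> by simp
    finally show ?thesis .
  qed
  have inc1: "\<And>i. 1 \<le> i \<Longrightarrow> i < n \<Longrightarrow> Suc i \<notin> Q1 \<Longrightarrow> \<sigma> (Suc i) = Suc (\<sigma> i)"
    using g1 unfolding good_def by auto
  have inc2: "\<And>i. 1 \<le> i \<Longrightarrow> i < n \<Longrightarrow> Suc i \<notin> Q1 \<Longrightarrow> \<tau> (Suc i) = Suc (\<tau> i)"
    using g2 QQ unfolding good_def by auto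
  have one: "1 \<in> Q1" using g1 unfolding good_def by auto
  have inside: "1 + m \<le> n \<longrightarrow> \<sigma> (1 + m) = \<tau> (1 + m)" for m
  proof (induction m)
    case 0 then show ?case using onQ one by simp
  next
    case (Suc m)
    show ?case
    proof
      assume h: "1 + Suc m \<le> n"
      show "\<sigma> (1 + Suc m) = \<tau> (1 + Suc m)"
      proof (cases "Suc (1 + m) \<in> Q1")
        case True then show ?thesis using onQ by simp
      next
        case False
        have "1 \<le> 1 + m" "1 + m < n" using h by auto
        then have "\<sigma> (Suc (1 + m)) = Suc (\<sigma> (1 + m))" "\<tau> (Suc (1 + m)) = Suc (\<tau> (1 + m))"
          using inc1 inc2 False by blast+
        moreover have "\<sigma> (1 + m) = \<tau> (1 + m)" using Suc h by simp
        ultimately show ?thesis by simp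
      qed
    qed
  qed
  show ?thesis
  proof
    fix i
    show "\<sigma> i = \<tau> i"
    proof (cases "i \<in> {1..n}")
      case True
      then show ?thesis using inside[of "i - 1"] by auto
    next
      case False
      then show ?thesis using p1 p2 by (simp add: permutes_not_in)
    qed
  qed
qed

lemma ball_good:
  assumes b: "\<sigma> \<in> block_ball n t" and tn: "Suc t \<le> n"
  shows "\<exists>Q. good n t \<sigma> Q"
proof -
  have perm: "\<sigma> permutes {1..n}" and bd: "block_dist n \<sigma> id \<le> t"
    using b unfolding block_ball_def by auto
  have injs: "inj_on \<sigma> {1..n}" using perm permutes_inj_on by blast
  have imgs: "\<sigma> ` {1..n} = {1..n}" using perm permutes_image by blast
  define B where "B = {i. 1 \<le> i \<and> i < n \<and> \<sigma> (i + 1) \<noteq> \<sigma> i + 1}"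
  have eqB: "char_set n \<sigma> - char_set n id = (\<lambda>i. (\<sigma> i, \<sigma> (i + 1))) ` B"
  proof
    show "char_set n \<sigma> - char_set n id \<subseteq> (\<lambda>i. (\<sigma> i, \<sigma> (i + 1))) ` B"
    proof
      fix x assume x: "x \<in> char_set n \<sigma> - char_set n id"
      then obtain i where i: "x = (\<sigma> i, \<sigma> (i + 1))" "1 \<le> i" "i < n"
        unfolding char_set_def by auto
      have "\<sigma> (i + 1) \<noteq> \<sigma> i + 1"
      proof
        assume e: "\<sigma> (i + 1) = \<sigma> i + 1"
        have "i \<in> {1..n}" "i + 1 \<in> {1..n}" using i by auto
        then have "\<sigma> i \<in> {1..n}" "\<sigma> (i + 1) \<in> {1..n}" using imgs by blast+
        then have "x \<in> char_set n id" using e i unfolding char_set_def by auto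
        then show False using x by simp
      qed
      then show "x \<in> (\<lambda>i. (\<sigma> i, \<sigma> (i + 1))) ` B" using i unfolding B_def by auto
    qed
  next
    show "(\<lambda>i. (\<sigma> i, \<sigma> (i + 1))) ` B \<subseteq> char_set n \<sigma> - char_set n id"
      unfolding B_def char_set_def by auto
  qed
  have "inj_on (\<lambda>i. (\<sigma> i, \<sigma> (i + 1))) B"
    by (rule inj_onI) (use injs in \<open>auto simp: B_def dest: inj_onD\<close>)
  then have "card B = block_dist n \<sigma> id" unfolding block_dist_def eqB by (simp add: card_image)
  then have cB: "card B \<le> t" using bd by simp
  have finB: "finite B" unfolding B_def by auto
  define Q0 where "Q0 = insert 1 (Suc ` B)"
  have "card Q0 \<le> Suc (card (Suc ` B))" unfolding Q0_def using finB by (simp add: card_insert_le_m1)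
  also have "card (Suc ` B) \<le> card B" using finB by (rule card_image_le)
  finally have cQ0: "card Q0 \<le> Suc t" using cB by simp
  have Q0sub: "Q0 \<subseteq> {1..n}" unfolding Q0_def B_def using tn by auto
  obtain Q where Q: "Q0 \<subseteq> Q" "Q \<subseteq> {1..n}" "card Q = Suc t"
    using exists_subset_between[OF cQ0 _ Q0sub] tn by auto
  have "good n t \<sigma> Q"
    unfolding good_def
  proof (intro conjI allI impI)
    show "Q \<subseteq> {1..n}" "card Q = Suc t" using Q by auto
    show "1 \<in> Q" using Q unfolding Q0_def by auto
    fix i assume "1 \<le> i" "i < n" "Suc i \<notin> Q"
    then have "i \<notin> B" using Q unfolding Q0_def by auto
    then show "\<sigma> (Suc i) = Suc (\<sigma> i)" using \<open>1 \<le> i\<close> \<open>i < n\<close> unfolding B_def by auto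
  qed
  then show ?thesis by blast
qed

lemma card_ball:
  assumes tn: "Suc t \<le> n"
  shows "card (block_ball n t) \<le> \<Prod>{n - t..n}"
proof -
  define enc where "enc \<sigma> = map \<sigma> (sorted_list_of_set (SOME Q. good n t \<sigma> Q))" for \<sigma> :: "nat \<Rightarrow> nat"
  have gd: "good n t \<sigma> (SOME Q. good n t \<sigma> Q)" if "\<sigma> \<in> block_ball n t" for \<sigma>
    using ball_good[OF that tn] by (rule someI_ex)
  have pm: "\<sigma> permutes {1..n}" if "\<sigma> \<in> block_ball n t" for \<sigma>
    using that unfolding block_ball_def by auto
  have inj: "inj_on enc (block_ball n t)"
    by (rule inj_onI) (metis enc_def enc_inj gd pm)
  define LS where "LS = {xs. length xs = Suc t \<and> distinct xs \<and> set xs \<subseteq> {1..n}}"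
  have img: "enc ` block_ball n t \<subseteq> LS"
  proof
    fix x assume "x \<in> enc ` block_ball n t"
    then obtain \<sigma> where s: "\<sigma> \<in> block_ball n t" "x = enc \<sigma>" by auto
    define Q where "Q = (SOME Q. good n t \<sigma> Q)"
    have g: "good n t \<sigma> Q" using gd[OF s(1)] by (simp add: Q_def)
    have Qs: "Q \<subseteq> {1..n}" "card Q = Suc t" using g unfolding good_def by auto
    have fQ: "finite Q" using Qs finite_subset by blast
    have injs: "inj_on \<sigma> {1..n}" using pm[OF s(1)] permutes_inj_on by blast
    have imgs: "\<sigma> ` {1..n} = {1..n}" using pm[OF s(1)] permutes_image by blast
    have "inj_on \<sigma> Q" using injs Qs inj_on_subset by blast
    then have "distinct (map \<sigma> (sorted_list_of_set Q))" using fQ by (simp add: distinct_map)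
    moreover have "set (map \<sigma> (sorted_list_of_set Q)) \<subseteq> {1..n}" using fQ Qs imgs by auto
    moreover have "length (map \<sigma> (sorted_list_of_set Q)) = Suc t" using fQ Qs by simp
    ultimately show "x \<in> LS" using s unfolding LS_def enc_def Q_def[symmetric] by simp
  qed
  have finLS: "finite LS" unfolding LS_def
    by (rule finite_subset[OF _ finite_lists_length_eq[of "{1..n}" "Suc t"]]) auto
  have "card (block_ball n t) \<le> card LS" using card_inj_on_le[OF inj img finLS] .
  also have "card LS = \<Prod>{n - Suc t + 1..n}" unfolding LS_def
    using card_lists_distinct_length_eq[of "{1..n}" "Suc t"] tn by simp
  also have "n - Suc t + 1 = n - t" using tn by simp
  finally show ?thesis .
qed

lemma prod_real:
  assumes "t \<le> n"
  shows "real (\<Prod>{n - t..n}) = (\<Prod>i=0..t. (real n - real i))"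
proof -
  have "\<Prod>{n - t..n} = (\<Prod>i=0..t. n - i)"
    by (rule prod.reindex_bij_witness[where i = "\<lambda>j. n - j" and j = "\<lambda>i. n - i"]) (use assms in auto)
  then have "real (\<Prod>{n - t..n}) = (\<Prod>i=0..t. real (n - i))" by (simp add: of_nat_prod)
  also have "\<dots> = (\<Prod>i=0..t. (real n - real i))"
    by (rule prod.cong) (use assms in \<open>auto simp: of_nat_diff\<close>)
  finally show ?thesis .
qed

lemma A_new_eq:
  assumes "1 \<le> d" "d \<le> n - 1"
  shows "A_new n d = real n * fact n / (real d * fact d)"
proof -
  obtain e where e: "d = Suc e" using assms by (cases d) auto
  have dn: "d \<le> n" using assms by simp
  have f: "fact d * fact (n - d) * (n choose d) = (fact n :: nat)"
    using binomial_fact_lemma[OF dn] .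
  have ab: "d * (n choose d) = n * ((n - 1) choose e)"
    using binomial_absorption[of e n] e by simp
  have sym: "(n - 1) choose (n - d) = (n - 1) choose e"
    using binomial_symmetric[of e "n - 1"] e assms by simp
  have pos: "((n - 1) choose e) > 0" using e assms by simp
  have fR: "fact d * fact (n - d) * real (n choose d) = fact n"
    using arg_cong[OF f, of real] by (simp add: of_nat_mult)
  have abR: "real d * real (n choose d) = real n * real ((n - 1) choose e)"
    using arg_cong[OF ab, of real] by simp
  have dpos: "real d > 0" using e by simp
  have "A_new n d = real (n choose d) * real (n choose d) * fact (n - d) / real ((n - 1) choose e)"
    unfolding A_new_def sym ..
  also have "\<dots> = real n * fact n / (real d * fact d)"
    using pos dpos fR abR by (simp add: field_simps)
  finally show ?thesis .
qed

theorem mainTheorem8: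
  fixes n t d :: nat
  assumes "n > 0" and "t > 0" and "d = 2 * t + 1"
    and "real t \<le> real n - sqrt (real n) - 1"
    and "real n * (\<Prod>i=0..t. (real n - real i)) \<le> real d * fact d"
    and "d \<le> n - 1"
  shows "A_new n d \<le> A_SP n t"
proof -
  have tn: "Suc t \<le> n" using assms by simp
  define B where "B = card (block_ball n t)"
  have "id \<in> block_ball n t" unfolding block_ball_def block_dist_def by (simp add: permutes_id)
  moreover have "finite (block_ball n t)"
    by (rule finite_subset[OF _ finite_permutations[of "{1..n}"]]) (auto simp: block_ball_def)
  ultimately have Bpos: "B > 0" unfolding B_def by (auto simp: card_gt_0_iff)
  have "real B \<le> (\<Prod>i=0..t. (real n - real i))"
    using card_ball[OF tn] prod_real[of t n] tn unfolding B_def by (metis Suc_leD of_nat_le_iff)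
  then have "real n * real B \<le> real d * fact d"
    using assms(5) by (meson order_trans mult_left_mono of_nat_0_le_iff)
  then have key: "real n * real B \<le> real d * fact d" .
  have dpos: "real d * fact d > 0" using assms(3) by simp
  have "A_new n d = real n * fact n / (real d * fact d)"
    using A_new_eq assms by simp
  also have "\<dots> \<le> fact n / real B"
    using key Bpos dpos by (simp add: field_simps)
  also have "\<dots> = A_SP n t" unfolding A_SP_def B_def ..
  finally show ?thesis .
qed

end
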